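(* For any partition $\lambda$, the function $s_\lambda:\mathbb{N}\to\mathbb{N}$ is a Castelnuovo function of the same weight as $\lambda$. The correspondence $\lambda\mapsto s_\lambda$ is a surjective map from the set of all partitions to the set of all Castelnuovo functions. Furthermore $(b(\lambda),w(\lambda))=(b(s_\lambda),w(s_\lambda))$.
   Context: $\mathbb{N}=\{0,1,2,\dots\}$. A partition is a finite nonincreasing sequence $\lambda=(\lambda_1,\dots,\lambda_r)$ of positive integers (the empty sequence is the partition of $0$); set $\lambda_i=0$ for $i<1$ and $i>r$; its weight is $\sum_i\lambda_i$. Its Ferrers graph has row $i$ (rows indexed from $0$) containing $\lambda_{i+1}$ left-justified unit squares, columns indexed from $0$; the square in row $r$, column $c$ is black if $r+c$ is even and white otherwise; $b(\lambda)$, $w(\lambda)$ are the numbers of black and white squares. Define $s_\lambda(m)$, for $m\in\mathbb{N}$, as the number of squares $(r,c)$ of the Ferrers graph with $r+c=m$, i.e. $s_\lambda(m)=\#\{i\ge 1: i\le m+1,\ \lambda_i\ge m+2-i\}$. A Castelnuovo function is a finitely supported function $s:\mathbb{N}\to\mathbb{N}$ such that for some integer $\sigma\ge 0$, $s(0)=1,s(1)=2,\dots,s(\sigma-1)=\sigma$ and $s(\sigma-1)\ge s(\sigma)\ge s(\sigma+1)\ge\dots\ge 0$ (with the convention $s(-1)=0$ when $\sigma=0$). Its weight is $\sum_n s(n)$, and $b(s)=\sum_i s(2i)$, $w(s)=\sum_i s(2i+1)$. *)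

theory Defs
  imports Main
begin

definition is_partition :: "nat list \<Rightarrow> bool" where
  "is_partition lam \<longleftrightarrow> sorted_wrt (\<ge>) lam \<and> (\<forall>x\<in>set lam. 0 < x)"

text \<open>Part lam i = lambda_i (1-indexed), 0 outside 1..r.\<close>
definition part :: "nat list \<Rightarrow> nat \<Rightarrow> nat" where
  "part lam i = (if 1 \<le> i \<and> i \<le> length lam then lam ! (i - 1) else 0)"

definition pweight :: "nat list \<Rightarrow> nat" where
  "pweight lam = sum_list lam"

text \<open>Squares (r,c) of the Ferrers graph, rows and columns indexed from 0.\<close>
definition ferrers :: "nat list \<Rightarrow> (nat \<times> nat) set" where
  "ferrers lam = {(r, c). r < length lam \<and> c < lam ! r}"

definition black_part :: "nat list \<Rightarrow> nat" where
  "black_part lam = card {(r, c) \<in> ferrers lam. even (r + c)}"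

definition white_part :: "nat list \<Rightarrow> nat" where
  "white_part lam = card {(r, c) \<in> ferrers lam. odd (r + c)}"

definition s_part :: "nat list \<Rightarrow> nat \<Rightarrow> nat" where
  "s_part lam m = card {i. 1 \<le> i \<and> i \<le> m + 1 \<and> part lam i \<ge> m + 2 - i}"

definition castelnuovo :: "(nat \<Rightarrow> nat) \<Rightarrow> bool" where
  "castelnuovo s \<longleftrightarrow> finite {n. s n \<noteq> 0} \<and>
     (\<exists>\<sigma>::nat. (\<forall>n<\<sigma>. s n = n + 1) \<and>
        (if \<sigma> = 0 then s 0 \<le> 0 else s \<sigma> \<le> s (\<sigma> - 1)) \<and>
        (\<forall>n\<ge>\<sigma>. s (Suc n) \<le> s n))"

definition fweight :: "(nat \<Rightarrow> nat) \<Rightarrow> nat" where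
  "fweight s = (\<Sum>n\<in>{n. s n \<noteq> 0}. s n)"

definition black_fun :: "(nat \<Rightarrow> nat) \<Rightarrow> nat" where
  "black_fun s = (\<Sum>i\<in>{i. s (2 * i) \<noteq> 0}. s (2 * i))"

definition white_fun :: "(nat \<Rightarrow> nat) \<Rightarrow> nat" where
  "white_fun s = (\<Sum>i\<in>{i. s (2 * i + 1) \<noteq> 0}. s (2 * i + 1))"

end

theory Submission
  imports Defs
begin

definition diag :: "(nat \<times> nat) set \<Rightarrow> nat \<Rightarrow> nat" where
  "diag D m = card {p\<in>D. fst p + snd p = m}"

definition dclosed :: "(nat \<times> nat) set \<Rightarrow> bool" where
  "dclosed D \<longleftrightarrow> (\<forall>r c r' c'. (r,c)\<in>D \<longrightarrow> r'\<le>r \<longrightarrow> c'\<le>c \<longrightarrow> (r',c')\<in>D)"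

lemma s_part_diag: "s_part lam m = diag (ferrers lam) m"
proof -
  have "{p\<in>ferrers lam. fst p + snd p = m} = (\<lambda>i. (i - 1, m + 1 - i)) ` {i. 1 \<le> i \<and> i \<le> m + 1 \<and> part lam i \<ge> m + 2 - i}"
  proof (rule set_eqI, rule iffI)
    fix p assume "p \<in> {p\<in>ferrers lam. fst p + snd p = m}"
    then obtain r c where p: "p = (r,c)" "r < length lam" "c < lam ! r" "r + c = m"
      by (cases p) (auto simp: ferrers_def)
    then have "Suc r \<in> {i. 1 \<le> i \<and> i \<le> m + 1 \<and> part lam i \<ge> m + 2 - i}"
      by (auto simp: part_def)
    moreover have "p = (\<lambda>i. (i - 1, m + 1 - i)) (Suc r)" using p by auto
    ultimately show "p \<in> (\<lambda>i. (i - 1, m + 1 - i)) ` {i. 1 \<le> i \<and> i \<le> m + 1 \<and> part lam i \<ge> m + 2 - i}"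
      by blast
  next
    fix p assume "p \<in> (\<lambda>i. (i - 1, m + 1 - i)) ` {i. 1 \<le> i \<and> i \<le> m + 1 \<and> part lam i \<ge> m + 2 - i}"
    then obtain i where i: "p = (i - 1, m + 1 - i)" "1 \<le> i" "i \<le> m + 1" "part lam i \<ge> m + 2 - i"
      by auto
    then have "i \<le> length lam" by (auto simp: part_def split: if_splits)
    with i show "p \<in> {p\<in>ferrers lam. fst p + snd p = m}"
      by (auto simp: part_def ferrers_def)
  qed
  moreover have "inj_on (\<lambda>i. (i - 1, m + 1 - i)) {i. 1 \<le> i \<and> i \<le> m + 1 \<and> part lam i \<ge> m + 2 - i}"
    by (auto simp: inj_on_def)
  ultimately show ?thesis unfolding s_part_def diag_def by (simp add: card_image)
qed

lemma finite_ferrers: "finite (ferrers lam)"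
proof -
  have "ferrers lam = Sigma {..<length lam} (\<lambda>r. {..<lam!r})" by (auto simp: ferrers_def)
  then show ?thesis by simp
qed

lemma card_ferrers: "card (ferrers lam) = sum_list lam"
proof -
  have "ferrers lam = Sigma {..<length lam} (\<lambda>r. {..<lam!r})" by (auto simp: ferrers_def)
  then have "card (ferrers lam) = (\<Sum>r<length lam. lam ! r)" by (simp add: card_SigmaI)
  then show ?thesis by (simp add: sum_list_sum_nth atLeast0LessThan)
qed

lemma dclosed_ferrers: "is_partition lam \<Longrightarrow> dclosed (ferrers lam)"
  unfolding dclosed_def
proof (intro allI impI)
  fix r c r' c'
  assume p: "is_partition lam" and rc: "(r, c) \<in> ferrers lam" and le: "r' \<le> r" "c' \<le> c"
  from p have s: "sorted_wrt (\<ge>) lam" by (simp add: is_partition_def)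
  from rc have r: "r < length lam" "c < lam ! r" by (auto simp: ferrers_def)
  have "lam ! r \<le> lam ! r'"
    using s r le
    by (metis le_eq_less_or_eq order_refl sorted_wrt_iff_nth_less)
  then show "(r', c') \<in> ferrers lam" using r le by (auto simp: ferrers_def)
qed

lemma diag_le: "diag D m \<le> m + 1"
proof -
  have "{p\<in>D. fst p + snd p = m} \<subseteq> (\<lambda>r. (r, m - r)) ` {..m}"
    by (auto simp: image_iff)
  then have "diag D m \<le> card ((\<lambda>r. (r, m - r)) ` {..m})"
    unfolding diag_def by (intro card_mono) auto
  also have "\<dots> \<le> m + 1" using card_image_le[of "{..m}" "(\<lambda>r. (r, m - r))"] by simp
  finally show ?thesis .
qed

lemma diag_full:
  assumes "finite D" "\<forall>r\<le>m. (r, m - r) \<in> D"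
  shows "diag D m \<ge> m + 1"
proof -
  have "(\<lambda>r. (r, m - r)) ` {..m} \<subseteq> {p\<in>D. fst p + snd p = m}"
    using assms(2) by auto
  then have "card ((\<lambda>r. (r, m - r)) ` {..m}) \<le> diag D m"
    unfolding diag_def using assms(1) by (intro card_mono) auto
  moreover have "card ((\<lambda>r. (r, m - r)) ` {..m}) = m + 1"
    by (subst card_image) (auto simp: inj_on_def)
  ultimately show ?thesis by simp
qed

lemma diag_step:
  assumes D: "finite D" "dclosed D" and a: "(a, b) \<notin> D" and n: "a + b \<le> n"
  shows "diag D (Suc n) \<le> diag D n"
proof -
  define f where "f = (\<lambda>(r::nat, c::nat). if r < a then (r, c - 1) else (r - 1, c))"
  let ?A = "{p\<in>D. fst p + snd p = Suc n}" and ?B = "{p\<in>D. fst p + snd p = n}"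
  have key: "\<And>r c. (r, c) \<in> D \<Longrightarrow> r + c = Suc n \<Longrightarrow> \<not> r < a \<Longrightarrow> c < b"
  proof (rule ccontr)
    fix r c assume "(r, c) \<in> D" "r + c = Suc n" "\<not> r < a" "\<not> c < b"
    then have "(a, b) \<in> D" using D(2) unfolding dclosed_def by auto
    then show False using a by simp
  qed
  have img: "f ` ?A \<subseteq> ?B"
  proof
    fix q assume "q \<in> f ` ?A"
    then obtain r c where rc: "(r, c) \<in> D" "r + c = Suc n" and q: "q = f (r, c)" by auto
    show "q \<in> ?B"
    proof (cases "r < a")
      case True
      have "c \<ge> 1" using True rc n by auto
      then have "(r, c - 1) \<in> D" using rc D(2) unfolding dclosed_def by auto
      then show ?thesis using True rc q \<open>c \<ge> 1\<close> by (auto simp: f_def)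
    next
      case False
      then have "c < b" using key rc by auto
      then have "r \<ge> 1" using rc n by auto
      have "(r - 1, c) \<in> D" using rc D(2) unfolding dclosed_def by auto
      then show ?thesis using False rc q \<open>r \<ge> 1\<close> by (auto simp: f_def)
    qed
  qed
  have inj: "inj_on f ?A"
  proof (rule inj_onI)
    fix x y assume x: "x \<in> ?A" and y: "y \<in> ?A" and eq: "f x = f y"
    obtain r c where xr: "x = (r, c)" by (cases x)
    obtain r' c' where yr: "y = (r', c')" by (cases y)
    have rc: "(r, c) \<in> D" "r + c = Suc n" using x xr by auto
    have rc': "(r', c') \<in> D" "r' + c' = Suc n" using y yr by auto
    have g1: "\<not> r < a \<Longrightarrow> r > a" using key[OF rc(1) rc(2)] rc n by linarith
    have g2: "\<not> r' < a \<Longrightarrow> r' > a" using key[OF rc'(1) rc'(2)] rc' n by linarith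
    have "r = r' \<and> c = c'"
    proof (cases "r < a"; cases "r' < a")
      assume "r < a" "r' < a" then show ?thesis using eq xr yr rc rc' by (simp add: f_def)
    next
      assume "r < a" "\<not> r' < a" then show ?thesis using eq xr yr g2 by (auto simp: f_def)
    next
      assume "\<not> r < a" "r' < a" then show ?thesis using eq xr yr g1 by (auto simp: f_def)
    next
      assume "\<not> r < a" "\<not> r' < a" then show ?thesis using eq xr yr g1 g2 rc rc' by (simp add: f_def)
    qed
    then show "x = y" using xr yr by simp
  qed
  have fin: "finite ?B" using D(1) by simp
  show ?thesis unfolding diag_def by (rule card_inj_on_le[OF inj img fin])
qed

lemma diag_zero:
  assumes "finite D" shows "finite {m. diag D m \<noteq> 0}"
proof -
  have "{m. diag D m \<noteq> 0} \<subseteq> (\<lambda>p. fst p + snd p) ` D"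
  proof
    fix m assume "m \<in> {m. diag D m \<noteq> 0}"
    then have "card {p\<in>D. fst p + snd p = m} > 0" unfolding diag_def by simp
    then have "{p\<in>D. fst p + snd p = m} \<noteq> {}" unfolding card_gt_0_iff by (elim conjE)
    then obtain p where "p \<in> D" "fst p + snd p = m" by blast
    then show "m \<in> (\<lambda>p. fst p + snd p) ` D" by blast
  qed
  moreover have "finite ((\<lambda>p. fst p + snd p) ` D)" using assms by simp
  ultimately show ?thesis by (rule finite_subset)
qed

lemma castel_diag:
  assumes D: "finite D" "dclosed D"
  shows "castelnuovo (diag D)"
proof -
  have ex: "\<exists>m. diag D m \<noteq> m + 1"
  proof (rule ccontr)
    assume "\<not> ?thesis"
    then have "\<forall>m. diag D m = m + 1" by blast
    then have "{m. diag D m \<noteq> 0} = UNIV" by auto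
    then show False using diag_zero[OF D(1)] by (metis infinite_UNIV_nat)
  qed
  define sg where "sg = (LEAST m. diag D m \<noteq> m + 1)"
  have sg1: "diag D sg \<noteq> sg + 1" unfolding sg_def using ex by (rule LeastI_ex)
  have sg2: "diag D n = n + 1" if "n < sg" for n
    using not_less_Least[of n "\<lambda>m. diag D m \<noteq> m + 1"] that unfolding sg_def by blast
  have sgle: "diag D sg \<le> sg" using sg1 diag_le[of D sg] by linarith
  have "\<not> (\<forall>r\<le>sg. (r, sg - r) \<in> D)"
  proof
    assume "\<forall>r\<le>sg. (r, sg - r) \<in> D"
    then have "sg + 1 \<le> diag D sg" by (rule diag_full[OF D(1)])
    then show False using sg1 diag_le[of D sg] by linarith
  qed
  then obtain r where r: "r \<le> sg" "(r, sg - r) \<notin> D" by blast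
  show ?thesis unfolding castelnuovo_def
  proof (intro conjI exI[of _ sg])
    show "finite {n. diag D n \<noteq> 0}" by (rule diag_zero[OF D(1)])
    show "\<forall>n<sg. diag D n = n + 1" using sg2 by blast
    show "if sg = 0 then diag D 0 \<le> 0 else diag D sg \<le> diag D (sg - 1)"
    proof (cases "sg = 0")
      case True then show ?thesis using sgle by simp
    next
      case False
      then have "diag D (sg - 1) = sg" using sg2[of "sg - 1"] by simp
      then show ?thesis using False sgle by simp
    qed
    show "\<forall>n\<ge>sg. diag D (Suc n) \<le> diag D n"
    proof (intro allI impI)
      fix n assume "sg \<le> n"
      then have "r + (sg - r) \<le> n" using r(1) by simp
      then show "diag D (Suc n) \<le> diag D n" by (rule diag_step[OF D r(2)])
    qed
  qed
qed

lemma diag_sum: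
  assumes fD: "finite D" and ih: "inj h"
    and hg: "\<And>p. p \<in> D \<Longrightarrow> (\<exists>i. fst p + snd p = h i) \<Longrightarrow> fst p + snd p = h (g p)"
  shows "card {p\<in>D. \<exists>i. fst p + snd p = h i} = (\<Sum>i\<in>{i. diag D (h i) \<noteq> 0}. diag D (h i))"
proof -
  define S where "S = {p\<in>D. \<exists>i. fst p + snd p = h i}"
  define T where "T = g ` S"
  have fS: "finite S" using fD unfolding S_def by simp
  have fT: "finite T" using fS unfolding T_def by simp
  have fib: "{x\<in>S. g x = y} = {p\<in>D. fst p + snd p = h y}" for y
  proof (rule set_eqI, rule iffI)
    fix x assume "x \<in> {x\<in>S. g x = y}"
    then have x: "x \<in> D" "\<exists>i. fst x + snd x = h i" "g x = y" unfolding S_def by auto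
    then have "fst x + snd x = h y" using hg[OF x(1) x(2)] by simp
    then show "x \<in> {p\<in>D. fst p + snd p = h y}" using x by simp
  next
    fix x assume x: "x \<in> {p\<in>D. fst p + snd p = h y}"
    then have "x \<in> S" unfolding S_def by auto
    moreover have "fst x + snd x = h (g x)" using hg[of x] x by blast
    then have "h (g x) = h y" using x by simp
    then have "g x = y" using ih by (simp add: inj_eq)
    ultimately show "x \<in> {x\<in>S. g x = y}" by simp
  qed
  have "(\<Sum>y\<in>T. card {x\<in>S. g x = y}) = card S"
    using sum.group[OF fS fT, of g "\<lambda>_. 1::nat"] unfolding T_def by simp
  then have eq1: "(\<Sum>y\<in>T. diag D (h y)) = card S" by (simp add: fib diag_def)
  have sub: "{i. diag D (h i) \<noteq> 0} \<subseteq> T"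
  proof
    fix i assume "i \<in> {i. diag D (h i) \<noteq> 0}"
    then have "card {p\<in>D. fst p + snd p = h i} > 0" unfolding diag_def by simp
    then have "{p\<in>D. fst p + snd p = h i} \<noteq> {}" unfolding card_gt_0_iff by (elim conjE)
    then obtain p where p: "p \<in> D" "fst p + snd p = h i" by blast
    then have "p \<in> S" unfolding S_def by auto
    moreover have "fst p + snd p = h (g p)" using hg[of p] p by blast
    then have "h (g p) = h i" using p by simp
    then have "g p = i" using ih by (simp add: inj_eq)
    ultimately show "i \<in> T" unfolding T_def by blast
  qed
  have "(\<Sum>i\<in>{i. diag D (h i) \<noteq> 0}. diag D (h i)) = (\<Sum>y\<in>T. diag D (h y))"
    by (rule sum.mono_neutral_left[OF fT sub]) auto
  then show ?thesis using eq1 unfolding S_def by simp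
qed

lemma fweight_diag: "finite D \<Longrightarrow> fweight (diag D) = card D"
proof -
  assume fD: "finite D"
  have "card {p\<in>D. \<exists>i. fst p + snd p = i} = (\<Sum>i\<in>{i. diag D i \<noteq> 0}. diag D i)"
    using diag_sum[OF fD, of "\<lambda>i. i" "\<lambda>p. fst p + snd p"] by (simp add: inj_on_def)
  then show ?thesis unfolding fweight_def by simp
qed

lemma ev_ex: "(\<exists>i. (n::nat) = 2 * i) \<longleftrightarrow> even n" by presburger
lemma od_ex: "(\<exists>i. (n::nat) = 2 * i + 1) \<longleftrightarrow> odd n" by presburger

lemma black_diag: "finite D \<Longrightarrow> black_fun (diag D) = card {p\<in>D. even (fst p + snd p)}"
proof -
  assume fD: "finite D"
  have "card {p\<in>D. \<exists>i. fst p + snd p = 2 * i} = (\<Sum>i\<in>{i. diag D (2 * i) \<noteq> 0}. diag D (2 * i))"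
    by (rule diag_sum[OF fD, of "\<lambda>i. 2 * i" "\<lambda>p. (fst p + snd p) div 2"]) (auto simp: inj_on_def)
  moreover have "{p\<in>D. \<exists>i. fst p + snd p = 2 * i} = {p\<in>D. even (fst p + snd p)}"
    by (simp only: ev_ex)
  ultimately show ?thesis unfolding black_fun_def by simp
qed

lemma white_diag: "finite D \<Longrightarrow> white_fun (diag D) = card {p\<in>D. odd (fst p + snd p)}"
proof -
  assume fD: "finite D"
  have "card {p\<in>D. \<exists>i. fst p + snd p = 2 * i + 1} = (\<Sum>i\<in>{i. diag D (2 * i + 1) \<noteq> 0}. diag D (2 * i + 1))"
    by (rule diag_sum[OF fD, of "\<lambda>i. 2 * i + 1" "\<lambda>p. (fst p + snd p) div 2"]) (auto simp: inj_on_def)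
  moreover have "{p\<in>D. \<exists>i. fst p + snd p = 2 * i + 1} = {p\<in>D. odd (fst p + snd p)}"
    by (simp only: od_ex)
  ultimately show ?thesis unfolding white_fun_def by simp
qed

lemma down_nat:
  assumes "finite (A::nat set)" "\<And>x y. x \<in> A \<Longrightarrow> y \<le> x \<Longrightarrow> y \<in> A"
  shows "A = {..<card A}"
proof (cases "A = {}")
  case True then show ?thesis by simp
next
  case False
  have "A = {..Max A}"
  proof
    show "A \<subseteq> {..Max A}" using Max_ge[OF assms(1)] by auto
    show "{..Max A} \<subseteq> A" using assms(2) Max_in[OF assms(1) False] by auto
  qed
  moreover have "{..Max A} = {..<card {..Max A}}" by auto
  ultimately show ?thesis by simp
qed

lemma ferrers_exists:
  assumes fD: "finite D" and dc: "dclosed D"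
  shows "\<exists>lam. is_partition lam \<and> ferrers lam = D"
proof -
  define Rs where "Rs = {r. (r, 0) \<in> D}"
  define Cs where "Cs r = {c. (r, c) \<in> D}" for r
  define L where "L r = card (Cs r)" for r
  define R where "R = card Rs"
  define lam where "lam = map L [0..<R]"
  have fR: "finite Rs"
  proof -
    have "Rs \<subseteq> fst ` D" unfolding Rs_def by force
    then show ?thesis using fD finite_subset by blast
  qed
  have fC: "finite (Cs r)" for r
  proof -
    have "Cs r \<subseteq> snd ` D" unfolding Cs_def by force
    then show ?thesis using fD finite_subset by blast
  qed
  have Rs_eq: "Rs = {..<R}" unfolding R_def
    by (rule down_nat[OF fR]) (use dc in \<open>auto simp: Rs_def dclosed_def\<close>)
  have Cs_eq: "Cs r = {..<L r}" for r unfolding L_def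
    by (rule down_nat[OF fC]) (use dc in \<open>auto simp: Cs_def dclosed_def\<close>)
  have Lmono: "L j \<le> L i" if "i \<le> j" for i j
  proof -
    have "Cs j \<subseteq> Cs i" using dc that unfolding Cs_def dclosed_def by auto
    then show ?thesis unfolding L_def using fC by (intro card_mono) auto
  qed
  have memD: "(r, c) \<in> D \<longleftrightarrow> r < R \<and> c < L r" for r c
  proof
    assume "(r, c) \<in> D"
    then have "r \<in> Rs" "c \<in> Cs r" using dc unfolding Rs_def Cs_def dclosed_def by auto
    then show "r < R \<and> c < L r" using Rs_eq Cs_eq by auto
  next
    assume "r < R \<and> c < L r"
    then have "c \<in> Cs r" using Cs_eq by auto
    then show "(r, c) \<in> D" unfolding Cs_def by simp
  qed
  have "is_partition lam"
    unfolding is_partition_def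
  proof
    show "sorted_wrt (\<ge>) lam" unfolding lam_def sorted_wrt_iff_nth_less
      using Lmono by auto
    show "\<forall>x\<in>set lam. 0 < x"
    proof
      fix x assume "x \<in> set lam"
      then obtain r where r: "r < R" "x = L r" unfolding lam_def by auto
      then have "(r, 0) \<in> D" using Rs_eq unfolding Rs_def by auto
      then have "0 < L r" using memD by simp
      then show "0 < x" using r by simp
    qed
  qed
  moreover have "ferrers lam = D"
    unfolding ferrers_def lam_def using memD by auto
  ultimately show ?thesis by blast
qed

lemma castel_props:
  assumes "castelnuovo s"
  shows "\<exists>sg. (\<forall>n<sg. s n = n + 1) \<and> (\<forall>n. s n \<le> n + 1) \<and>
     (\<forall>a b. sg \<le> a \<longrightarrow> a \<le> b \<longrightarrow> s b \<le> s a) \<and> finite {n. s n \<noteq> 0}"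
proof -
  obtain sg where f: "finite {n. s n \<noteq> 0}" and s1: "\<forall>n<sg. s n = n + 1"
    and s2: "if sg = 0 then s 0 \<le> 0 else s sg \<le> s (sg - 1)"
    and s3: "\<forall>n\<ge>sg. s (Suc n) \<le> s n"
    using assms unfolding castelnuovo_def by blast
  have mono: "s b \<le> s a" if "sg \<le> a" "a \<le> b" for a b
    using that(2)
  proof (induction b rule: dec_induct)
    case base then show ?case by simp
  next
    case (step n)
    then show ?case using s3 that(1) by (meson le_trans)
  qed
  have sgb: "s sg \<le> sg"
  proof (cases "sg = 0")
    case True then show ?thesis using s2 by simp
  next
    case False then show ?thesis using s2 s1[rule_format, of "sg - 1"] by simp
  qed
  have "s n \<le> n + 1" for n
  proof (cases "n < sg")
    case True then show ?thesis using s1 by simp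
  next
    case False
    then have "s n \<le> s sg" using mono by simp
    then show ?thesis using sgb False by simp
  qed
  then show ?thesis using s1 mono f by blast
qed

lemma castel_surj:
  assumes "castelnuovo s"
  shows "\<exists>lam. is_partition lam \<and> s_part lam = s"
proof -
  obtain sg where s1: "\<forall>n<sg. s n = n + 1" and s2: "\<forall>n. s n \<le> n + 1"
    and s3: "\<forall>a b. sg \<le> a \<longrightarrow> a \<le> b \<longrightarrow> s b \<le> s a" and f: "finite {n. s n \<noteq> 0}"
    using castel_props[OF assms] by blast
  define D where "D = {p. fst p < s (fst p + snd p)}"
  obtain N where N: "\<forall>n\<in>{n. s n \<noteq> 0}. n \<le> N" using f finite_nat_set_iff_bounded_le by blast
  have "D \<subseteq> {..N} \<times> {..N}"
  proof
    fix p assume "p \<in> D"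
    then have "s (fst p + snd p) \<noteq> 0" unfolding D_def by auto
    then have "fst p + snd p \<le> N" using N by auto
    then show "p \<in> {..N} \<times> {..N}" by (cases p) auto
  qed
  then have fD: "finite D" using finite_subset by blast
  have dc: "dclosed D" unfolding dclosed_def
  proof (intro allI impI)
    fix r c r' c' assume rc: "(r, c) \<in> D" "r' \<le> r" "c' \<le> c"
    show "(r', c') \<in> D"
    proof (cases "r' + c' < sg")
      case True then show ?thesis using s1 unfolding D_def by simp
    next
      case False
      then have "s (r + c) \<le> s (r' + c')" using s3 rc by simp
      then show ?thesis using rc unfolding D_def by simp
    qed
  qed
  obtain lam where lam: "is_partition lam" "ferrers lam = D" using ferrers_exists[OF fD dc] by blast
  have "diag D m = s m" for m
  proof -
    have "{p\<in>D. fst p + snd p = m} = (\<lambda>r. (r, m - r)) ` {..<s m}"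
    proof (rule set_eqI, rule iffI)
      fix p assume "p \<in> {p\<in>D. fst p + snd p = m}"
      then show "p \<in> (\<lambda>r. (r, m - r)) ` {..<s m}" unfolding D_def by (cases p) auto
    next
      fix p assume "p \<in> (\<lambda>r. (r, m - r)) ` {..<s m}"
      then obtain r where r: "r < s m" "p = (r, m - r)" by auto
      then have "r \<le> m" using s2[rule_format, of m] by simp
      then show "p \<in> {p\<in>D. fst p + snd p = m}" using r unfolding D_def by simp
    qed
    moreover have "inj_on (\<lambda>r. (r, m - r)) {..<s m}" by (auto simp: inj_on_def)
    ultimately show ?thesis unfolding diag_def by (simp add: card_image)
  qed
  then have "s_part lam = s" using lam(2) by (simp add: s_part_diag fun_eq_iff)
  then show ?thesis using lam(1) by blast
qed

theorem proposition2:
  shows "(\<forall>lam. is_partition lam \<longrightarrow>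
            castelnuovo (s_part lam) \<and> fweight (s_part lam) = pweight lam \<and>
            black_part lam = black_fun (s_part lam) \<and>
            white_part lam = white_fun (s_part lam))
       \<and> (\<forall>s. castelnuovo s \<longrightarrow> (\<exists>lam. is_partition lam \<and> s_part lam = s))"
proof (intro conjI allI impI)
  fix lam assume p: "is_partition lam"
  have sd: "s_part lam = diag (ferrers lam)" by (simp add: s_part_diag fun_eq_iff)
  show "castelnuovo (s_part lam)" unfolding sd
    by (rule castel_diag[OF finite_ferrers dclosed_ferrers[OF p]])
  show "fweight (s_part lam) = pweight lam" unfolding sd pweight_def
    by (simp add: fweight_diag[OF finite_ferrers] card_ferrers)
  have e1: "{(r, c) \<in> ferrers lam. even (r + c)} = {p \<in> ferrers lam. even (fst p + snd p)}" by auto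
  have e2: "{(r, c) \<in> ferrers lam. odd (r + c)} = {p \<in> ferrers lam. odd (fst p + snd p)}" by auto
  show "black_part lam = black_fun (s_part lam)" unfolding sd black_part_def e1
    by (simp add: black_diag[OF finite_ferrers])
  show "white_part lam = white_fun (s_part lam)" unfolding sd white_part_def e2
    by (simp add: white_diag[OF finite_ferrers])
next
  fix s :: "nat \<Rightarrow> nat" assume "castelnuovo s"
  then show "\<exists>lam. is_partition lam \<and> s_part lam = s" by (rule castel_surj)
qed

end
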